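(* Let $R>0$, $x_0\in\mathbb{R}^d$ and $u\in\mathcal{P}^F_R(x_0)$. Then $$\sup_{\partial B_r(x_0)}u\ge C r^\beta\qquad\text{for all }0<r<R,$$ where $\beta=\frac{2}{2-\gamma}$ and $C>0$ is a constant depending only on $d$, $\Lambda$ and $\gamma$.
   Context: Fix $d\ge1$, $\Lambda\ge1$, $\gamma\in(1,2)$. $\mathcal{S}_d$ is the space of real symmetric $d\times d$ matrices. Standing assumptions on $F:\mathcal{S}_d\to\mathbb{R}$: (i) uniform ellipticity: $\frac1\Lambda\|P\|\le F(M+P)-F(M)\le\Lambda\|P\|$ for all $M,P\in\mathcal{S}_d$, $P\ge0$; (ii) $F$ is convex, $F(0)=0$, and the trace map is a sub-differential of $F$ at $0$ (i.e. $\mathrm{trace}(M)\le F(M)$ for all $M$); (iii) either $F$ is (Gâteaux) differentiable at $0$, or $F(\lambda M)=\lambda F(M)$ for all $\lambda>0$, $M\in\mathcal{S}_d$. $\mathcal{P}^F_R(x_0)$ is the class of continuous viscosity solutions $u$ of $F(D^2u)=u^{\gamma-1}$, $u\ge0$ in $B_R(x_0)$, such that $x_0\in\partial\{u>0\}$. *)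

theory Defs
  imports "HOL-Analysis.Analysis"
begin

definition sym_mat :: "real^'n^'n \<Rightarrow> bool" where
  "sym_mat M \<longleftrightarrow> transpose M = M"

definition psd_mat :: "real^'n^'n \<Rightarrow> bool" where
  "psd_mat P \<longleftrightarrow> (\<forall>x. 0 \<le> x \<bullet> (P *v x))"

definition mat_norm :: "real^'n^'n \<Rightarrow> real" where
  "mat_norm P = onorm (\<lambda>x. P *v x)"

text \<open>Standing assumptions (i)-(iii) on F (only its values on symmetric matrices matter).\<close>
definition admissible_F :: "real \<Rightarrow> (real^'n^'n \<Rightarrow> real) \<Rightarrow> bool" where
  "admissible_F \<Lambda> F \<longleftrightarrow>
     (\<forall>M P. sym_mat M \<and> sym_mat P \<and> psd_mat P \<longrightarrow>
        mat_norm P / \<Lambda> \<le> F (M + P) - F M \<and> F (M + P) - F M \<le> \<Lambda> * mat_norm P)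
   \<and> convex_on {M. sym_mat M} F
   \<and> F 0 = 0
   \<and> (\<forall>M. sym_mat M \<longrightarrow> trace M \<le> F M)
   \<and> ((\<exists>L. linear L \<and> (\<forall>M. sym_mat M \<longrightarrow>
            ((\<lambda>t. F (t *\<^sub>R M)) has_real_derivative L M) (at 0)))
      \<or> (\<forall>c>0. \<forall>M. sym_mat M \<longrightarrow> F (c *\<^sub>R M) = c * F M))"

definition C2_with :: "(real^'n \<Rightarrow> real) \<Rightarrow> (real^'n \<Rightarrow> real^'n) \<Rightarrow> (real^'n \<Rightarrow> real^'n^'n)
    \<Rightarrow> (real^'n) set \<Rightarrow> bool" where
  "C2_with \<phi> g H S \<longleftrightarrow> open S \<and>
     (\<forall>y\<in>S. (\<phi> has_derivative (\<lambda>h. g y \<bullet> h)) (at y)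
           \<and> (g has_derivative (\<lambda>h. H y *v h)) (at y))
     \<and> continuous_on S H"

text \<open>Viscosity solution of F(D^2 u) = f(u) in the open set \<Omega> (test functions C^2).\<close>
definition visc_sub :: "(real^'n^'n \<Rightarrow> real) \<Rightarrow> (real \<Rightarrow> real) \<Rightarrow> (real^'n) set
    \<Rightarrow> (real^'n \<Rightarrow> real) \<Rightarrow> bool" where
  "visc_sub F f \<Omega> u \<longleftrightarrow>
     (\<forall>x \<phi> g H S. x \<in> S \<and> S \<subseteq> \<Omega> \<and> C2_with \<phi> g H S \<and>
        (\<forall>y\<in>S. u y - \<phi> y \<le> u x - \<phi> x) \<longrightarrow> F (H x) \<ge> f (u x))"

definition visc_super :: "(real^'n^'n \<Rightarrow> real) \<Rightarrow> (real \<Rightarrow> real) \<Rightarrow> (real^'n) set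
    \<Rightarrow> (real^'n \<Rightarrow> real) \<Rightarrow> bool" where
  "visc_super F f \<Omega> u \<longleftrightarrow>
     (\<forall>x \<phi> g H S. x \<in> S \<and> S \<subseteq> \<Omega> \<and> C2_with \<phi> g H S \<and>
        (\<forall>y\<in>S. u y - \<phi> y \<ge> u x - \<phi> x) \<longrightarrow> F (H x) \<le> f (u x))"

definition visc_sol :: "(real^'n^'n \<Rightarrow> real) \<Rightarrow> (real \<Rightarrow> real) \<Rightarrow> (real^'n) set
    \<Rightarrow> (real^'n \<Rightarrow> real) \<Rightarrow> bool" where
  "visc_sol F f \<Omega> u \<longleftrightarrow> continuous_on \<Omega> u \<and> visc_sub F f \<Omega> u \<and> visc_super F f \<Omega> u"

definition classP :: "(real^'n^'n \<Rightarrow> real) \<Rightarrow> real \<Rightarrow> real \<Rightarrow> real^'n \<Rightarrow> (real^'n \<Rightarrow> real) \<Rightarrow> bool" where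
  "classP F \<gamma> R x0 u \<longleftrightarrow>
     visc_sol F (\<lambda>s. s powr (\<gamma> - 1)) (ball x0 R) u
     \<and> (\<forall>x\<in>ball x0 R. 0 \<le> u x)
     \<and> x0 \<in> frontier {x \<in> ball x0 R. 0 < u x}"

end

theory Submission imports Defs begin

lemma smat_mult: "((c::real) *\<^sub>R mat 1) *v (x::real^'n) = c *\<^sub>R x"
  by (metis scaleR_matrix_vector_assoc matrix_vector_mul_lid)

lemma mat_norm_smat: "mat_norm ((c::real) *\<^sub>R (mat 1 :: real^'n^'n)) = \<bar>c\<bar>"
proof -
  have "mat_norm ((c::real) *\<^sub>R (mat 1 :: real^'n^'n)) = onorm (\<lambda>x::real^'n. c *\<^sub>R x)"
    unfolding mat_norm_def smat_mult ..
  also have "\<dots> = \<bar>c\<bar> * onorm (\<lambda>x::real^'n. x)"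
    by (rule onorm_scaleR) (rule bounded_linear_ident)
  finally show ?thesis by (simp add: onorm_id)
qed

lemma sym_smat: "sym_mat ((c::real) *\<^sub>R (mat 1 :: real^'n^'n))"
  unfolding sym_mat_def by (simp add: transpose_scalar transpose_mat)

lemma psd_smat: "c \<ge> 0 \<Longrightarrow> psd_mat ((c::real) *\<^sub>R (mat 1 :: real^'n^'n))"
  unfolding psd_mat_def by (simp add: smat_mult)

lemma touch:
  fixes u :: "real^'n \<Rightarrow> real" and p :: "real^'n"
  assumes vs: "visc_sub F f \<Omega> u" and S: "open S" "S \<subseteq> \<Omega>" "z \<in> S"
    and mx: "\<forall>y\<in>S. u y - c * (norm (y - p))\<^sup>2 \<le> u z - c * (norm (z - p))\<^sup>2"
  shows "F ((2*c) *\<^sub>R mat 1) \<ge> f (u z)"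
proof -
  define \<phi> where "\<phi> = (\<lambda>y::real^'n. c * ((y - p) \<bullet> (y - p)))"
  define g where "g = (\<lambda>y::real^'n. (2*c) *\<^sub>R (y - p))"
  define H where "H = (\<lambda>y::real^'n. (2*c) *\<^sub>R (mat 1 :: real^'n^'n))"
  have d1: "(\<phi> has_derivative (\<lambda>h. g y \<bullet> h)) (at y)" for y
  proof -
    have "((\<lambda>y. c * ((y - p) \<bullet> (y - p))) has_derivative (\<lambda>h. c * (h \<bullet> (y - p) + (y - p) \<bullet> h))) (at y)"
      by (auto intro!: derivative_eq_intros)
    moreover have "(\<lambda>h. c * (h \<bullet> (y - p) + (y - p) \<bullet> h)) = (\<lambda>h. g y \<bullet> h)"
      by (auto simp: g_def inner_commute algebra_simps)
    ultimately show ?thesis unfolding \<phi>_def by simp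
  qed
  have d2: "(g has_derivative (\<lambda>h. H y *v h)) (at y)" for y
  proof -
    have "(g has_derivative (\<lambda>h. (2*c) *\<^sub>R h)) (at y)"
      unfolding g_def by (auto intro!: derivative_eq_intros)
    then show ?thesis by (simp add: H_def smat_mult)
  qed
  have "C2_with \<phi> g H S" unfolding C2_with_def using S d1 d2
    by (auto simp: H_def)
  moreover have "\<forall>y\<in>S. u y - \<phi> y \<le> u z - \<phi> z"
    using mx by (simp add: \<phi>_def power2_norm_eq_inner)
  ultimately have "F (H z) \<ge> f (u z)"
    using vs S unfolding visc_sub_def by blast
  then show ?thesis by (simp add: H_def)
qed


lemma ell_upper:
  assumes "admissible_F \<Lambda> F" "c \<ge> 0"
  shows "F ((c::real) *\<^sub>R (mat 1 :: real^'n^'n)) \<le> \<Lambda> * c"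
proof -
  have "F (0 + c *\<^sub>R (mat 1 :: real^'n^'n)) - F 0 \<le> \<Lambda> * mat_norm (c *\<^sub>R (mat 1 :: real^'n^'n))"
    using assms sym_smat[of c] psd_smat[of c] unfolding admissible_F_def
    by (metis sym_smat[of 0] scale_zero_left)
  then show ?thesis using assms by (simp add: mat_norm_smat admissible_F_def)
qed

lemma ell_lower:
  assumes "admissible_F \<Lambda> F" "c \<ge> 0"
  shows "F ((- c) *\<^sub>R (mat 1 :: real^'n^'n)) \<le> - c / \<Lambda>"
proof -
  have "mat_norm (c *\<^sub>R (mat 1 :: real^'n^'n)) / \<Lambda> \<le> F ((- c) *\<^sub>R mat 1 + c *\<^sub>R (mat 1 :: real^'n^'n)) - F ((- c) *\<^sub>R mat 1)"
    using assms sym_smat[of c] psd_smat[of c] sym_smat[of "-c"] unfolding admissible_F_def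
    by blast
  moreover have "(- c) *\<^sub>R mat 1 + c *\<^sub>R (mat 1 :: real^'n^'n) = 0"
    by (simp add: scaleR_left_distrib[symmetric])
  ultimately show ?thesis using assms by (simp add: mat_norm_smat admissible_F_def)
qed

lemma maxp:
  fixes u :: "real^'n \<Rightarrow> real"
  assumes adm: "admissible_F \<Lambda> F" and L: "\<Lambda> \<ge> 1"
    and vs: "visc_sub F (\<lambda>s. s powr (\<gamma> - 1)) (ball x0 R) u"
    and cu: "continuous_on (ball x0 R) u" and r: "0 < r" "r < R" and w: "w \<in> cball x0 r"
  shows "u w \<le> (SUP y\<in>sphere x0 r. u y)"
proof (rule ccontr)
  define S0 where "S0 = (SUP y\<in>sphere x0 r. u y)"
  assume "\<not> u w \<le> (SUP y\<in>sphere x0 r. u y)"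
  hence lt: "S0 < u w" by (simp add: S0_def)
  have sub: "cball x0 r \<subseteq> ball x0 R" using r by auto
  have "compact (u ` sphere x0 r)"
    by (rule compact_continuous_image) (use cu sub sphere_cball in \<open>meson continuous_on_subset order_trans\<close>, simp)
  hence bdd: "bdd_above (u ` sphere x0 r)" by (simp add: compact_imp_bounded bounded_imp_bdd_above)
  hence sph: "u y \<le> S0" if "y \<in> sphere x0 r" for y
    unfolding S0_def using that by (simp add: cSUP_upper)
  define \<epsilon> where "\<epsilon> = (u w - S0) / (2 * r\<^sup>2)"
  have ep: "\<epsilon> > 0" using lt r by (simp add: \<epsilon>_def)
  have epr: "\<epsilon> * r\<^sup>2 = (u w - S0) / 2" using r by (simp add: \<epsilon>_def field_simps)
  define v where "v = (\<lambda>x. u x + \<epsilon> * (norm (x - x0))\<^sup>2)"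
  have cv: "continuous_on (cball x0 r) v" unfolding v_def
    by (intro continuous_intros continuous_on_subset[OF cu sub])
  obtain z where z: "z \<in> cball x0 r" and zmax: "\<And>y. y \<in> cball x0 r \<Longrightarrow> v y \<le> v z"
    using continuous_attains_sup[OF compact_cball _ cv] r by (metis ball_eq_empty centre_in_ball empty_iff not_less_iff_gr_or_eq subset_empty ball_subset_cball)
  have "v z \<ge> v w" using zmax w by blast
  moreover have "v w \<ge> u w" unfolding v_def using ep by simp
  ultimately have vz: "v z \<ge> u w" by linarith
  have "z \<in> ball x0 r"
  proof (rule ccontr)
    assume "z \<notin> ball x0 r"
    hence "z \<in> sphere x0 r" using z by auto
    hence "norm (z - x0) = r" "u z \<le> S0" using sph by (auto simp: dist_norm norm_minus_commute)
    hence "v z = u z + \<epsilon> * r\<^sup>2" "u z \<le> S0" unfolding v_def by auto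
    hence "v z \<le> S0 + (u w - S0) / 2" using epr by linarith
    thus False using vz lt by (simp add: field_simps)
  qed
  have "F ((2 * (- \<epsilon>)) *\<^sub>R mat 1) \<ge> u z powr (\<gamma> - 1)"
    apply (rule touch[OF vs _ _ \<open>z \<in> ball x0 r\<close>, where p = x0])
    using r zmax by (auto simp: v_def)
  moreover have "F ((- (2 * \<epsilon>)) *\<^sub>R (mat 1 :: real^'n^'n)) \<le> - (2*\<epsilon>) / \<Lambda>"
    using ell_lower[OF adm, of "2*\<epsilon>"] ep by simp
  moreover have "- (2*\<epsilon>) / \<Lambda> < 0" using ep L by simp
  ultimately show False by (smt (verit) powr_ge_zero mult_minus_right)
qed

lemma stepA:
  fixes u :: "real^'n \<Rightarrow> real"
  assumes adm: "admissible_F \<Lambda> F" and L: "\<Lambda> \<ge> 1" and g: "1 < \<gamma>"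
    and vs: "visc_sub F (\<lambda>s. s powr (\<gamma> - 1)) (ball x0 R) u"
    and cu: "continuous_on (ball x0 R) u" and sub: "cball p \<rho> \<subseteq> ball x0 R" and rho: "\<rho> > 0"
    and a: "a > 0" "2 * a * \<Lambda> < u p powr (\<gamma> - 1)" and up: "u p > 0"
  shows "\<exists>w. dist p w = \<rho> \<and> u w \<ge> u p + a * \<rho>\<^sup>2"
proof -
  define v where "v = (\<lambda>x. u x - a * (norm (x - p))\<^sup>2)"
  have cv: "continuous_on (cball p \<rho>) v" unfolding v_def
    by (intro continuous_intros continuous_on_subset[OF cu sub])
  obtain z where z: "z \<in> cball p \<rho>" and zmax: "\<And>y. y \<in> cball p \<rho> \<Longrightarrow> v y \<le> v z"
    using continuous_attains_sup[OF compact_cball _ cv] rho by (metis ball_eq_empty centre_in_ball empty_iff not_less_iff_gr_or_eq subset_empty ball_subset_cball)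
  have "v z \<ge> v p" using zmax rho by simp
  hence vz: "v z \<ge> u p" by (simp add: v_def)
  have "z \<notin> ball p \<rho>"
  proof
    assume zb: "z \<in> ball p \<rho>"
    have "F ((2 * a) *\<^sub>R mat 1) \<ge> u z powr (\<gamma> - 1)"
      apply (rule touch[OF vs _ _ zb, where p = p])
      using sub zmax by (auto simp: v_def)
    moreover have "F ((2 * a) *\<^sub>R (mat 1 :: real^'n^'n)) \<le> \<Lambda> * (2 * a)"
      using ell_upper[OF adm, of "2*a"] a by simp
    moreover have "u z \<ge> u p" using vz a unfolding v_def by (smt (verit) mult_nonneg_nonneg zero_le_power2)
    hence "u z powr (\<gamma> - 1) \<ge> u p powr (\<gamma> - 1)" using up g by (intro powr_mono2) auto
    moreover have "\<Lambda> * (2 * a) = 2 * a * \<Lambda>" by simp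
    ultimately show False using a by linarith
  qed
  hence "dist p z = \<rho>" using z by auto
  moreover have "norm (z - p) = \<rho>" using \<open>dist p z = \<rho>\<close> by (simp add: dist_norm norm_minus_commute)
  ultimately show ?thesis using vz by (auto simp: v_def)
qed


theorem corollary2p10:
  fixes \<Lambda> \<gamma> :: real
  assumes "\<Lambda> \<ge> 1" and "1 < \<gamma>" and "\<gamma> < 2"
  shows "\<exists>C>0. \<forall>(F :: real^'n^'n \<Rightarrow> real) R (x0 :: real^'n) u.
           admissible_F \<Lambda> F \<and> R > 0 \<and> classP F \<gamma> R x0 u \<longrightarrow>
           (\<forall>r. 0 < r \<and> r < R \<longrightarrow>
              (SUP y\<in>sphere x0 r. u y) \<ge> C * r powr (2 / (2 - \<gamma>)))"
proof -
  note L = assms(1) and g1 = assms(2) and g2 = assms(3)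
  define \<beta> where "\<beta> = 2 / (2 - \<gamma>)"
  define ib where "ib = (2 - \<gamma>) / 2"
  have bpos: "\<beta> > 0" and ibpos: "ib > 0" using g2 by (auto simp: \<beta>_def ib_def)
  have bib: "\<beta> * ib = 1" "ib * \<beta> = 1" using g2 by (auto simp: \<beta>_def ib_def)
  have twoib: "2 * ib = 2 - \<gamma>" by (simp add: ib_def)
  define \<kappa> where "\<kappa> = 2 * sqrt \<Lambda> * 2 powr (\<beta> / 2)"
  have kpos: "\<kappa> > 0" using L by (simp add: \<kappa>_def)
  have k2: "\<kappa>\<^sup>2 = 4 * \<Lambda> * 2 powr \<beta>"
  proof -
    have "(2 powr (\<beta> / 2))\<^sup>2 = 2 powr \<beta>"
      by (simp add: power2_eq_square powr_add[symmetric])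
    thus ?thesis using L by (simp add: \<kappa>_def power_mult_distrib)
  qed
  define C where "C = (1 / (6 * \<kappa>)) powr \<beta>"
  have Cpos: "C > 0" using kpos by (simp add: C_def)
  show ?thesis
  proof (intro exI[of _ C] conjI Cpos allI impI)
    fix F :: "real^'n^'n \<Rightarrow> real" and R and x0 :: "real^'n" and u r
    assume H: "admissible_F \<Lambda> F \<and> 0 < R \<and> classP F \<gamma> R x0 u" and r: "0 < r \<and> r < R"
    have adm: "admissible_F \<Lambda> F" using H by blast
    have cu: "continuous_on (ball x0 R) u" and vs: "visc_sub F (\<lambda>s. s powr (\<gamma> - 1)) (ball x0 R) u"
      and nn: "\<And>x. x \<in> ball x0 R \<Longrightarrow> 0 \<le> u x"
      and fr: "x0 \<in> frontier {x \<in> ball x0 R. 0 < u x}"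
      using H by (auto simp: classP_def visc_sol_def)
    have "x0 \<in> closure {x \<in> ball x0 R. 0 < u x}" using fr by (simp add: frontier_def)
    then obtain y where y: "y \<in> ball x0 R" "0 < u y" "dist y x0 < r / 4"
      using r unfolding closure_approachable by (metis (no_types, lifting) divide_pos_pos mem_Collect_eq zero_less_numeral)
    define K where "K = cball y (r / 2)"
    have Ksub: "K \<subseteq> ball x0 R"
    proof
      fix x assume "x \<in> K"
      hence "dist y x \<le> r / 2" by (simp add: K_def)
      thus "x \<in> ball x0 R" using y(3) r using dist_triangle[of x0 x y] by (simp add: dist_commute)
    qed
    define q where "q = (\<lambda>x. u x powr ib)"
    define \<Psi> where "\<Psi> = (\<lambda>x. 2 * \<kappa> * q x - dist x y)"
    have cK: "continuous_on K u" using continuous_on_subset[OF cu Ksub] .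
    have cq: "continuous_on K q" unfolding q_def
      by (rule continuous_on_powr'[OF cK continuous_on_const]) (use nn Ksub ibpos in auto)
    have cPsi: "continuous_on K \<Psi>" unfolding \<Psi>_def
      by (intro continuous_intros cq)
    obtain p where pK: "p \<in> K" and pmax: "\<And>x. x \<in> K \<Longrightarrow> \<Psi> x \<le> \<Psi> p"
      using continuous_attains_sup[OF _ _ cPsi] r unfolding K_def
      by (metis compact_cball cball_eq_empty centre_in_cball empty_iff half_gt_zero less_le_not_le)
    have yK: "y \<in> K" using r by (simp add: K_def)
    have qy: "q y > 0" using y by (simp add: q_def)
    have "\<Psi> p \<ge> \<Psi> y" using pmax yK .
    moreover have "\<Psi> y > 0" using qy kpos by (simp add: \<Psi>_def)
    ultimately have Psip: "\<Psi> p > 0" by linarith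
    hence dpy: "dist p y < 2 * \<kappa> * q p" by (simp add: \<Psi>_def)
    hence qp: "q p > 0" using kpos by (smt (verit) zero_le_dist mult_pos_pos mult_nonneg_nonneg zero_less_mult_iff)
    have upnn: "u p \<ge> 0" using nn Ksub pK by auto
    have up: "u p > 0" using qp upnn by (cases "u p = 0") (auto simp: q_def)
    define m where "m = u p"
    define \<rho> where "\<rho> = \<kappa> * q p"
    have rho: "\<rho> > 0" using kpos qp by (simp add: \<rho>_def)
    have dyp: "dist y p \<le> r / 2" using pK by (simp add: K_def)
    have qb: "q p \<ge> r / (6 * \<kappa>)"
    proof (cases "cball p \<rho> \<subseteq> ball x0 R")
      case True
      define a where "a = m powr (\<gamma> - 1) / (4 * \<Lambda>)"
      have mpos: "m > 0" using up by (simp add: m_def)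
      have apos: "a > 0" using mpos L by (simp add: a_def)
      have a2: "2 * a * \<Lambda> < u p powr (\<gamma> - 1)" using mpos L by (simp add: a_def m_def field_simps)
      obtain w where w: "dist p w = \<rho>" "u w \<ge> u p + a * \<rho>\<^sup>2"
        using stepA[OF adm L g1 vs cu True rho apos a2 up] by blast
      have "(q p)\<^sup>2 = m powr (2 - \<gamma>)"
        using twoib by (simp add: q_def m_def power2_eq_square powr_add[symmetric])
      hence "a * \<rho>\<^sup>2 = 2 powr \<beta> * (m powr (\<gamma> - 1) * m powr (2 - \<gamma>))"
        using L by (simp add: \<rho>_def a_def power_mult_distrib k2)
      also have "m powr (\<gamma> - 1) * m powr (2 - \<gamma>) = m"
        using mpos by (simp add: powr_add[symmetric])
      finally have arho: "a * \<rho>\<^sup>2 = 2 powr \<beta> * m" .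
      have uw: "u w \<ge> 2 powr \<beta> * m" using w(2) arho mpos by (simp add: m_def)
      have "q w \<ge> (2 powr \<beta> * m) powr ib"
        unfolding q_def using uw mpos ibpos by (intro powr_mono2) auto
      also have "(2 powr \<beta> * m) powr ib = 2 * q p"
        using mpos by (simp add: powr_mult powr_powr bib q_def m_def)
      finally have qw: "q w \<ge> 2 * q p" .
      have dwy: "dist w y \<le> dist p y + \<rho>" using w(1)
        by (metis dist_commute dist_triangle)
      have "\<Psi> w > \<Psi> p"
      proof -
        have "\<Psi> w \<ge> 2 * \<kappa> * (2 * q p) - (dist p y + \<rho>)"
          unfolding \<Psi>_def using qw dwy kpos by (smt (verit) mult_left_mono)
        moreover have "2 * \<kappa> * (2 * q p) - (dist p y + \<rho>) > \<Psi> p"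
          using kpos qp by (simp add: \<Psi>_def \<rho>_def algebra_simps)
        ultimately show ?thesis by linarith
      qed
      hence "w \<notin> K" using pmax by force
      hence "dist y w > r / 2" by (simp add: K_def)
      moreover have "dist y w \<le> dist p y + \<rho>" using dwy by (simp add: dist_commute)
      ultimately have "r / 2 < 3 * \<kappa> * q p" using dpy by (simp add: \<rho>_def)
      thus ?thesis using kpos by (simp add: field_simps)
    next
      case False
      then obtain x where x: "x \<in> cball p \<rho>" "x \<notin> ball x0 R" by blast
      hence x1: "dist p x \<le> \<rho>" by simp
      have "dist x0 x \<ge> R" using x by simp
      moreover have "dist x0 x \<le> dist x0 y + dist y p + dist p x"
        by (metis dist_triangle add_mono order_trans order_refl)
      ultimately have "R \<le> r/4 + r/2 + \<rho>" using y(3) dyp x1 by (simp add: dist_commute)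
      hence "\<rho> > r / 4" using r by linarith
      hence "r / 4 < \<kappa> * q p" by (simp add: \<rho>_def)
      thus ?thesis using kpos r by (simp add: field_simps)
    qed
    have "u p = (q p) powr \<beta>"
      using up by (simp add: q_def powr_powr bib)
    also have "(q p) powr \<beta> \<ge> (r / (6 * \<kappa>)) powr \<beta>"
      using qb r kpos bpos by (intro powr_mono2) auto
    moreover have "(r / (6 * \<kappa>)) powr \<beta> = C * r powr \<beta>"
      using r kpos by (simp add: C_def powr_mult[symmetric])
    ultimately have upC: "u p \<ge> C * r powr \<beta>" by linarith
    have "p \<in> cball x0 r"
    proof -
      have "dist x0 p \<le> dist x0 y + dist y p" by (rule dist_triangle)
      thus ?thesis using y(3) dyp r by (simp add: dist_commute)
    qed
    hence "u p \<le> (SUP y\<in>sphere x0 r. u y)"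
      using maxp[OF adm L vs cu] r by blast
    thus "(SUP y\<in>sphere x0 r. u y) \<ge> C * r powr (2 / (2 - \<gamma>))"
      using upC by (simp add: \<beta>_def)
  qed
qed

end
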